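(* (i) There exists a regular curve in $\mathbb{E}^4$ which admits a generalized Bishop frame of type C but does not admit a generalized Bishop frame of type D. (ii) There exists a regular curve in $\mathbb{E}^4$ which does not admit a generalized Bishop frame of type C.
   Context: A regular curve $\gamma: I\to\mathbb{E}^4$ ($I$ an open interval) is considered with arc-length parametrization; $\mathbb{T}=\gamma'$ is its unit tangent vector. A frame on $\gamma$ is an ordered orthonormal frame $(\mathbb{T},\mathbb{Z}_1,\mathbb{Z}_2,\mathbb{Z}_3)$ of smooth vector fields along $\gamma$ whose first vector is $\mathbb{T}$; it is identified with the smooth map $\mathbb{Z}: I\to O(4)$ whose rows are these vectors. Its coefficient matrix is the $\mathfrak{o}(4)$-valued function $X$ with $\mathbb{Z}'=X\mathbb{Z}$. A frame is of type B, C, D, F respectively if, after possibly permuting $\mathbb{Z}_1,\mathbb{Z}_2,\mathbb{Z}_3$ (keeping $\mathbb{T}$ first), its coefficient matrix has the respective form, for some smooth functions $x_1,x_2,x_3$ (no sign conditions): Type B: $\begin{pmatrix}0&x_1&x_2&x_3\\-x_1&0&0&0\\-x_2&0&0&0\\-x_3&0&0&0\end{pmatrix}$; Type C: $\begin{pmatrix}0&x_1&x_2&0\\-x_1&0&0&x_3\\-x_2&0&0&0\\0&-x_3&0&0\end{pmatrix}$; Type D: $\begin{pmatrix}0&x_1&0&0\\-x_1&0&x_2&x_3\\0&-x_2&0&0\\0&-x_3&0&0\end{pmatrix}$; Type F: $\begin{pmatrix}0&x_1&0&0\\-x_1&0&x_2&0\\0&-x_2&0&x_3\\0&0&-x_3&0\end{pmatrix}$.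 A curve admits a frame of a given type if such a frame exists along it. *)

theory Defs
  imports "HOL-Analysis.Analysis"
begin

definition smooth_on :: "real set \<Rightarrow> (real \<Rightarrow> 'a::real_normed_vector) \<Rightarrow> bool" where
  "smooth_on I f \<longleftrightarrow>
     (\<exists>D. D 0 = f \<and> (\<forall>n. \<forall>t\<in>I. (D n has_vector_derivative D (Suc n) t) (at t)))"

definition unit_speed_curve :: "real set \<Rightarrow> (real \<Rightarrow> real^4) \<Rightarrow> bool" where
  "unit_speed_curve I \<gamma> \<longleftrightarrow>
     open I \<and> is_interval I \<and> I \<noteq> {} \<and> smooth_on I \<gamma> \<and>
     (\<forall>t\<in>I. norm (vector_derivative \<gamma> (at t)) = 1)"

text \<open>A frame on the curve: smooth map into O(4) (rows = frame vectors, row 1 = T).\<close>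
definition frame_on :: "real set \<Rightarrow> (real \<Rightarrow> real^4) \<Rightarrow> (real \<Rightarrow> real^4^4) \<Rightarrow> bool" where
  "frame_on I \<gamma> Z \<longleftrightarrow> smooth_on I Z \<and>
     (\<forall>t\<in>I. orthogonal_matrix (Z t) \<and> Z t $ 1 = vector_derivative \<gamma> (at t))"

text \<open>Coefficient matrix shapes (rows/columns indexed T, Z1, Z2, Z3).\<close>
definition shape_B :: "real \<Rightarrow> real \<Rightarrow> real \<Rightarrow> real^4^4" where
  "shape_B x1 x2 x3 = vector [vector [0, x1, x2, x3], vector [-x1, 0, 0, 0],
                              vector [-x2, 0, 0, 0], vector [-x3, 0, 0, 0]]"
definition shape_C :: "real \<Rightarrow> real \<Rightarrow> real \<Rightarrow> real^4^4" where
  "shape_C x1 x2 x3 = vector [vector [0, x1, x2, 0], vector [-x1, 0, 0, x3],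
                              vector [-x2, 0, 0, 0], vector [0, -x3, 0, 0]]"
definition shape_D :: "real \<Rightarrow> real \<Rightarrow> real \<Rightarrow> real^4^4" where
  "shape_D x1 x2 x3 = vector [vector [0, x1, 0, 0], vector [-x1, 0, x2, x3],
                              vector [0, -x2, 0, 0], vector [0, -x3, 0, 0]]"
definition shape_F :: "real \<Rightarrow> real \<Rightarrow> real \<Rightarrow> real^4^4" where
  "shape_F x1 x2 x3 = vector [vector [0, x1, 0, 0], vector [-x1, 0, x2, 0],
                              vector [0, -x2, 0, x3], vector [0, 0, -x3, 0]]"

text \<open>The curve admits a frame of the type given by shape M: a frame Z and a permutation
  \<sigma> of the indices fixing the first (T) one such that the permuted frame
  (T, Z_{\<sigma> 2}, Z_{\<sigma> 3}, Z_{\<sigma> 4}) has coefficient matrix M(x1,x2,x3) for smooth x1,x2,x3,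
  i.e. its derivative equals M(x1 t, x2 t, x3 t) times itself.\<close>
definition admits_frame_type ::
  "real set \<Rightarrow> (real \<Rightarrow> real^4) \<Rightarrow> (real \<Rightarrow> real \<Rightarrow> real \<Rightarrow> real^4^4) \<Rightarrow> bool" where
  "admits_frame_type I \<gamma> M \<longleftrightarrow>
     (\<exists>Z \<sigma> x1 x2 x3. frame_on I \<gamma> Z \<and> \<sigma> permutes (UNIV :: 4 set) \<and> \<sigma> 1 = 1 \<and>
        smooth_on I x1 \<and> smooth_on I x2 \<and> smooth_on I x3 \<and>
        (\<forall>t\<in>I. ((\<lambda>s. \<chi> i. Z s $ \<sigma> i) has_vector_derivative
                   (M (x1 t) (x2 t) (x3 t) ** (\<chi> i. Z t $ \<sigma> i))) (at t)))"

end

theory Submission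
  imports Defs
begin


definition psi :: "nat \<Rightarrow> real \<Rightarrow> real" where
  "psi k t = (if t \<le> 0 then 0 else exp (- inverse t) * inverse t ^ k)"

lemma psi_right: "((\<lambda>t. exp (- inverse t) * inverse t ^ k) \<longlongrightarrow> 0) (at_right (0::real))"
proof -
  have "((\<lambda>x. x ^ k / exp x) \<longlongrightarrow> (0::real)) at_top" by (rule tendsto_power_div_exp_0)
  then have "((\<lambda>t. (inverse t) ^ k / exp (inverse t)) \<longlongrightarrow> (0::real)) (at_right 0)"
    using filterlim_compose filterlim_inverse_at_top_right by blast
  then show ?thesis by (simp add: exp_minus field_simps)
qed

lemma psi_tendsto: "(psi k \<longlongrightarrow> 0) (at 0)"
proof (rule filterlim_split_at)
  show "(psi k \<longlongrightarrow> 0) (at_left 0)"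
    by (rule tendsto_eventually) (auto simp: eventually_at_left_field psi_def intro: exI[of _ "-1"])
  show "(psi k \<longlongrightarrow> 0) (at_right 0)"
    apply (rule Lim_transform_eventually[OF psi_right])
    by (auto simp: eventually_at_right_field psi_def intro: exI[of _ "1"])
qed

lemma psi_deriv: "(psi k has_real_derivative (psi (Suc (Suc k)) t - real k * psi (Suc k) t)) (at t)"
proof (cases "t < 0")
  case True
  have "((\<lambda>_. 0) has_real_derivative 0) (at t)" by simp
  then have "(psi k has_real_derivative 0) (at t)"
    by (rule has_field_derivative_transform_within_open[of _ _ _ "{..<0}"]) (use True in \<open>auto simp: psi_def\<close>)
  then show ?thesis using True by (simp add: psi_def)
next
  case False
  show ?thesis
  proof (cases "t = 0")
    case True
    have "((\<lambda>y. (psi k y - psi k 0) / (y - 0)) \<longlongrightarrow> 0) (at 0)"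
      apply (rule Lim_transform_eventually[OF psi_tendsto[of "Suc k"]])
      by (auto simp: eventually_at psi_def field_simps intro!: exI[of _ 1])
    then have "(psi k has_real_derivative 0) (at 0)"
      using has_field_derivative_iff by blast
    then show ?thesis using True by (simp add: psi_def)
  next
    case False
    then have tp: "t > 0" using \<open>\<not> t < 0\<close> by simp
    have "((\<lambda>t. exp (- inverse t) * inverse t ^ k) has_real_derivative
       (exp (- inverse t) * (inverse t ^ 2) * inverse t ^ k + exp (- inverse t) * (real k * inverse t ^ (k - 1) * (- (inverse t ^ 2))))) (at t)"
      using tp by (auto intro!: derivative_eq_intros simp: power2_eq_square)
    moreover have "exp (- inverse t) * (inverse t ^ 2) * inverse t ^ k + exp (- inverse t) * (real k * inverse t ^ (k - 1) * (- (inverse t ^ 2)))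
       = psi (Suc (Suc k)) t - real k * psi (Suc k) t"
    proof (cases k)
      case 0 then show ?thesis using tp by (simp add: psi_def power2_eq_square)
    next
      case (Suc m) then show ?thesis using tp by (simp add: psi_def power2_eq_square field_simps)
    qed
    ultimately have "((\<lambda>t. exp (- inverse t) * inverse t ^ k) has_real_derivative
       (psi (Suc (Suc k)) t - real k * psi (Suc k) t)) (at t)" by simp
    then show ?thesis
      by (rule has_field_derivative_transform_within_open[of _ _ _ "{0<..}"]) (use tp in \<open>auto simp: psi_def\<close>)
  qed
qed

inductive_set SM :: "(real \<Rightarrow> real) set" where
  SM_const: "(\<lambda>t. c) \<in> SM"
| SM_psi: "psi k \<in> SM"
| SM_add: "f \<in> SM \<Longrightarrow> g \<in> SM \<Longrightarrow> (\<lambda>t. f t + g t) \<in> SM"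
| SM_mult: "f \<in> SM \<Longrightarrow> g \<in> SM \<Longrightarrow> (\<lambda>t. f t * g t) \<in> SM"
| SM_sin: "f \<in> SM \<Longrightarrow> (\<lambda>t. sin (f t)) \<in> SM"
| SM_cos: "f \<in> SM \<Longrightarrow> (\<lambda>t. cos (f t)) \<in> SM"
| SM_aff: "f \<in> SM \<Longrightarrow> (\<lambda>t. f (a * t + c)) \<in> SM"

lemma SM_deriv: "f \<in> SM \<Longrightarrow> \<exists>f'\<in>SM. \<forall>t. (f has_real_derivative f' t) (at t)"
proof (induction rule: SM.induct)
  case (SM_const c)
  show ?case by (rule bexI[of _ "\<lambda>t. 0"]) (auto intro: SM.SM_const)
next
  case (SM_psi k)
  show ?case
    apply (rule bexI[of _ "\<lambda>t. psi (Suc (Suc k)) t + (- real k) * psi (Suc k) t"])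
    using psi_deriv[of k] apply simp
    by (intro SM.intros)
next
  case (SM_add f g)
  then obtain f' g' where "f' \<in> SM" "g' \<in> SM" "\<forall>t. (f has_real_derivative f' t) (at t)"
    "\<forall>t. (g has_real_derivative g' t) (at t)" by blast
  then show ?case
    by (intro bexI[of _ "\<lambda>t. f' t + g' t"]) (auto intro!: derivative_eq_intros SM.intros)
next
  case (SM_mult f g)
  then obtain f' g' where "f' \<in> SM" "g' \<in> SM" "\<forall>t. (f has_real_derivative f' t) (at t)"
    "\<forall>t. (g has_real_derivative g' t) (at t)" by blast
  then show ?case
    by (intro bexI[of _ "\<lambda>t. f' t * g t + f t * g' t"]) (auto intro!: derivative_eq_intros SM.intros SM_mult.hyps)
next
  case (SM_sin f)
  then obtain f' where "f' \<in> SM" "\<forall>t. (f has_real_derivative f' t) (at t)" by blast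
  then show ?case
    by (intro bexI[of _ "\<lambda>t. cos (f t) * f' t"]) (auto intro!: derivative_eq_intros SM.intros SM_sin.hyps)
next
  case (SM_cos f)
  then obtain f' where "f' \<in> SM" "\<forall>t. (f has_real_derivative f' t) (at t)" by blast
  then show ?case
    apply (intro bexI[of _ "\<lambda>t. (-1) * sin (f t) * f' t"])
    subgoal by (auto intro!: derivative_eq_intros)
    by (intro SM.intros SM_cos.hyps)
next
  case (SM_aff f a c)
  then obtain f' where "f' \<in> SM" "\<forall>t. (f has_real_derivative f' t) (at t)" by blast
  then show ?case
    apply (intro bexI[of _ "\<lambda>t. a * f' (a * t + c)"])
    subgoal proof
      fix t
      have i: "((\<lambda>t. a * t + c) has_real_derivative a) (at t)" by (auto intro!: derivative_eq_intros)
      have "((\<lambda>t. f (a * t + c)) has_real_derivative f' (a * t + c) * a) (at t)"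
        by (rule DERIV_chain2[OF _ i]) (use \<open>\<forall>t. (f has_real_derivative f' t) (at t)\<close> in blast)
      then show "((\<lambda>t. f (a * t + c)) has_real_derivative a * f' (a * t + c)) (at t)" by (simp add: mult.commute)
    qed
    by (auto intro!: SM.intros)
qed

definition nd :: "(real \<Rightarrow> real) \<Rightarrow> (real \<Rightarrow> real)" where
  "nd f = (SOME f'. f' \<in> SM \<and> (\<forall>t. (f has_real_derivative f' t) (at t)))"

lemma nd: assumes "f \<in> SM" shows "nd f \<in> SM \<and> (\<forall>t. (f has_real_derivative nd f t) (at t))"
proof -
  have "\<exists>f'. f' \<in> SM \<and> (\<forall>t. (f has_real_derivative f' t) (at t))" using SM_deriv[OF assms] by blast
  then show ?thesis unfolding nd_def by (rule someI_ex)
qed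

lemma SM_smooth: assumes "f \<in> SM" shows "smooth_on S f"
proof -
  have mem: "(nd ^^ n) f \<in> SM" for n
    by (induction n) (use assms nd in auto)
  show ?thesis unfolding smooth_on_def
    apply (rule exI[of _ "\<lambda>n. (nd ^^ n) f"])
    using nd[OF mem] by (auto simp: has_real_derivative_iff_has_vector_derivative)
qed

lemma SM_deriv_mem: assumes "f \<in> SM" "\<And>t. (f has_real_derivative d t) (at t)" shows "d \<in> SM"
proof -
  have "d = nd f" using nd[OF assms(1)] assms(2) by (auto intro: DERIV_unique)
  then show ?thesis using nd[OF assms(1)] by simp
qed

lemma vec_vd:
  fixes G :: "real \<Rightarrow> 'a::real_normed_vector^'n"
  assumes "\<And>i. ((\<lambda>s. G s $ i) has_vector_derivative (G' $ i)) (at t within S)"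
  shows "(G has_vector_derivative G') (at t within S)"
proof -
  have "((\<lambda>y. \<chi> i. ((G y $ i - G t $ i) - (y - t) *\<^sub>R G' $ i) /\<^sub>R norm (y - t)) \<longlongrightarrow> (\<chi> i. 0)) (at t within S)"
    apply (rule tendsto_vec_lambda)
    using assms unfolding has_vector_derivative_def has_derivative_at_within by auto
  moreover have "(\<lambda>y. \<chi> i. ((G y $ i - G t $ i) - (y - t) *\<^sub>R G' $ i) /\<^sub>R norm (y - t))
     = (\<lambda>y. ((G y - G t) - (y - t) *\<^sub>R G') /\<^sub>R norm (y - t))"
    by (auto simp: vec_eq_iff)
  moreover have "(\<chi> i. 0) = (0::'a^'n)" by (simp add: vec_eq_iff)
  ultimately have "((\<lambda>y. ((G y - G t) - (y - t) *\<^sub>R G') /\<^sub>R norm (y - t)) \<longlongrightarrow> 0) (at t within S)"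
    by simp
  then show ?thesis unfolding has_vector_derivative_def has_derivative_at_within
    by (auto intro: bounded_linear_scaleR_left)
qed

lemma vd_nth:
  fixes G :: "real \<Rightarrow> 'a::real_normed_vector^'n"
  assumes "(G has_vector_derivative G') F"
  shows "((\<lambda>s. G s $ i) has_vector_derivative G' $ i) F"
  using bounded_linear.has_derivative[OF bounded_linear_vec_nth[of i] assms[unfolded has_vector_derivative_def]]
  unfolding has_vector_derivative_def by simp

lemma smooth_vec:
  fixes F :: "real \<Rightarrow> 'a::real_normed_vector^'n"
  assumes "\<And>i. smooth_on S (\<lambda>t. F t $ i)"
  shows "smooth_on S F"
proof -
  have "\<forall>i. \<exists>D. D 0 = (\<lambda>t. F t $ i) \<and> (\<forall>n. \<forall>t\<in>S. (D n has_vector_derivative D (Suc n) t) (at t))"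
    using assms unfolding smooth_on_def by blast
  then obtain DD where DD: "\<And>i. DD i 0 = (\<lambda>t. F t $ i)"
    "\<And>i n t. t \<in> S \<Longrightarrow> (DD i n has_vector_derivative DD i (Suc n) t) (at t)"
    by metis
  show ?thesis unfolding smooth_on_def
  proof (intro exI[of _ "\<lambda>n t. \<chi> i. DD i n t"] conjI allI ballI)
    show "(\<lambda>t. \<chi> i. DD i 0 t) = F" using DD(1) by (auto simp: vec_eq_iff)
    fix n t assume "t \<in> S"
    show "((\<lambda>t. \<chi> i. DD i n t) has_vector_derivative (\<chi> i. DD i (Suc n) t)) (at t)"
      by (rule vec_vd) (use DD(2)[OF \<open>t \<in> S\<close>] in simp)
  qed
qed

lemma vector4_nth [simp]:
  "(vector [a,b,c,d] :: 'a::zero^4) $ 1 = a"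
  "(vector [a,b,c,d] :: 'a::zero^4) $ 2 = b"
  "(vector [a,b,c,d] :: 'a::zero^4) $ 3 = c"
  "(vector [a,b,c,d] :: 'a::zero^4) $ 4 = d"
  unfolding vector_def by simp_all

lemma vector4_vd:
  fixes f1 f2 f3 f4 :: "real \<Rightarrow> 'a::real_normed_vector"
  assumes "(f1 has_vector_derivative a) (at t)" "(f2 has_vector_derivative b) (at t)"
    "(f3 has_vector_derivative c) (at t)" "(f4 has_vector_derivative d) (at t)"
  shows "((\<lambda>s. vector [f1 s, f2 s, f3 s, f4 s] :: 'a^4) has_vector_derivative vector [a,b,c,d]) (at t)"
  apply (rule vec_vd)
  subgoal for i using assms exhaust_4[of i] by auto
  done

lemma vector4_smooth:
  fixes f1 f2 f3 f4 :: "real \<Rightarrow> 'a::real_normed_vector"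
  assumes "smooth_on S f1" "smooth_on S f2" "smooth_on S f3" "smooth_on S f4"
  shows "smooth_on S (\<lambda>s. vector [f1 s, f2 s, f3 s, f4 s] :: 'a^4)"
  apply (rule smooth_vec)
  subgoal for i using assms exhaust_4[of i] by auto
  done




definition bt :: "real \<Rightarrow> real" where "bt s = psi 0 s * psi 0 (1 - s)"
definition dbt :: "real \<Rightarrow> real" where "dbt s = psi 2 s * psi 0 (1 - s) - psi 0 s * psi 2 (1 - s)"

lemma psi0_deriv: "(psi 0 has_real_derivative psi 2 t) (at t)"
  using psi_deriv[of 0 t] by (simp add: numeral_2_eq_2)

lemma bt_deriv: "(bt has_real_derivative dbt s) (at s)"
proof -
  have a: "((\<lambda>s. psi 0 (1 - s)) has_real_derivative psi 2 (1 - s) * (-1)) (at s)"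
    by (rule DERIV_chain2[OF psi0_deriv]) (auto intro!: derivative_eq_intros)
  have "((\<lambda>s. psi 0 s * psi 0 (1 - s)) has_real_derivative psi 2 s * psi 0 (1 - s) - psi 0 s * psi 2 (1 - s)) (at s)"
    using DERIV_mult[OF psi0_deriv a] by (simp add: algebra_simps)
  then show ?thesis by (simp add: bt_def[abs_def] dbt_def)
qed

lemma bt_SM: "bt \<in> SM"
proof -
  have "(\<lambda>s. psi 0 s * (\<lambda>t. psi 0 ((-1) * t + 1)) s) \<in> SM" by (intro SM.intros)
  then show ?thesis unfolding bt_def by (simp add: fun_eq_iff)
qed

lemma dbt_SM: "dbt \<in> SM" using SM_deriv_mem[OF bt_SM bt_deriv] .

lemma bt_zero: "s \<le> 0 \<or> s \<ge> 1 \<Longrightarrow> bt s = 0 \<and> dbt s = 0"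
  by (auto simp: bt_def dbt_def psi_def)

lemma bt_bounds: "0 \<le> bt s \<and> bt s \<le> 1"
proof -
  have "0 \<le> psi 0 x \<and> psi 0 x \<le> 1" for x
    by (auto simp: psi_def)
  then show ?thesis unfolding bt_def by (simp add: mult_le_one)
qed

lemma dbt_nz: assumes "0 < s" "s < 1" "s \<noteq> 1/2" shows "dbt s \<noteq> 0"
proof -
  have "dbt s = exp (- inverse s) * exp (- inverse (1 - s)) * (inverse s ^ 2 - inverse (1 - s) ^ 2)"
    using assms by (simp add: dbt_def psi_def algebra_simps)
  moreover have "inverse s ^ 2 \<noteq> inverse (1 - s) ^ 2"
  proof
    assume "inverse s ^ 2 = inverse (1 - s) ^ 2"
    then have "s ^ 2 = (1 - s) ^ 2" using assms by (simp add: power_inverse)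
    then have "s = 1 - s \<or> s = - (1 - s)" by (simp add: power2_eq_iff)
    then show False using assms by auto
  qed
  ultimately show ?thesis by simp
qed

definition gg :: "nat \<Rightarrow> real \<Rightarrow> real" where "gg j t = bt (t - real j)"
definition dg :: "nat \<Rightarrow> real \<Rightarrow> real" where "dg j t = dbt (t - real j)"

lemma gg_deriv: "((\<lambda>t. gg j t) has_real_derivative dg j t) (at t within S)"
proof -
  have "((\<lambda>t. bt (t - real j)) has_real_derivative dbt (t - real j) * 1) (at t)"
    by (rule DERIV_chain2[OF bt_deriv]) (auto intro!: derivative_eq_intros)
  then show ?thesis unfolding gg_def dg_def by (simp add: has_field_derivative_at_within)
qed

lemma gg_SM: "gg j \<in> SM"
proof -
  have "(\<lambda>t. bt (1 * t + (- real j))) \<in> SM" by (intro SM.intros bt_SM)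
  then show ?thesis unfolding gg_def by (simp add: fun_eq_iff)
qed

lemma dg_SM: "dg j \<in> SM"
  using SM_deriv_mem[OF gg_SM[of j], of "dg j"] gg_deriv[of j _ UNIV] by (metis)

lemma gg_zero: "t \<le> real j \<or> t \<ge> real j + 1 \<Longrightarrow> gg j t = 0 \<and> dg j t = 0"
  unfolding gg_def dg_def by (rule bt_zero) auto

lemma gg_cont [continuous_intros]: "continuous_on S (gg j)"
  using gg_deriv DERIV_isCont continuous_at_imp_continuous_on by blast

lemma gg_bounds: "0 \<le> gg j t \<and> gg j t \<le> 1"
  unfolding gg_def by (rule bt_bounds)

lemma dg_nz: "real j < t \<Longrightarrow> t < real j + 1 \<Longrightarrow> t \<noteq> real j + 1/2 \<Longrightarrow> dg j t \<noteq> 0"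
  unfolding dg_def by (rule dbt_nz) auto




lemma zero_lo: "t \<le> real i \<Longrightarrow> gg i t = 0 \<and> dg i t = 0" using gg_zero by blast
lemma zero_hi: "t \<ge> real i + 1 \<Longrightarrow> gg i t = 0 \<and> dg i t = 0" using gg_zero by blast

definition GG :: "real \<Rightarrow> real" where "GG t = gg 0 t + gg 1 t + gg 2 t + gg 3 t"
definition TT :: "real \<Rightarrow> real^4" where
  "TT t = vector [cos (GG t), sin (gg 0 t) + sin (gg 3 t), sin (gg 1 t), sin (gg 2 t)]"
definition dTT :: "real \<Rightarrow> real^4" where
  "dTT t = vector [- (dg 0 t + dg 1 t + dg 2 t + dg 3 t) * sin (GG t),
     dg 0 t * cos (gg 0 t) + dg 3 t * cos (gg 3 t), dg 1 t * cos (gg 1 t), dg 2 t * cos (gg 2 t)]"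

lemma TT_deriv: "(TT has_vector_derivative dTT t) (at t)"
  unfolding TT_def[abs_def] dTT_def GG_def
  by (intro vector4_vd) (auto simp: has_real_derivative_iff_has_vector_derivative[symmetric] algebra_simps
     intro!: derivative_eq_intros gg_deriv)

lemma GG_SM: "GG \<in> SM"
proof -
  have "(\<lambda>t. gg 0 t + gg 1 t + gg 2 t + gg 3 t) \<in> SM" by (intro SM.intros gg_SM[unfolded eta_contract_eq])
  then show ?thesis by (simp add: GG_def[abs_def])
qed

lemma TT_smooth: "smooth_on S TT"
proof -
  have "smooth_on S (\<lambda>t. vector [cos (GG t), sin (gg 0 t) + sin (gg 3 t), sin (gg 1 t), sin (gg 2 t)] :: real^4)"
    by (intro vector4_smooth SM_smooth SM.intros gg_SM GG_SM)
  then show ?thesis by (simp add: TT_def[abs_def])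
qed

lemma TT_cont: "continuous_on S TT"
  using TT_deriv has_vector_derivative_continuous continuous_at_imp_continuous_on by blast

lemma TT_norm: "norm (TT t) = 1"
proof -
  have "TT t \<bullet> TT t = 1"
  proof (cases "t \<le> 1")
    case True
    then show ?thesis using zero_lo[of t 1] zero_lo[of t 2] zero_lo[of t 3]
      by (simp add: TT_def GG_def inner_vec_def sum_4 power2_eq_square[symmetric])
  next
    case f1: False
    show ?thesis
    proof (cases "t \<le> 2")
      case True
      then show ?thesis using f1 zero_hi[of 0 t] zero_lo[of t 2] zero_lo[of t 3]
        by (simp add: TT_def GG_def inner_vec_def sum_4 power2_eq_square[symmetric])
    next
      case f2: False
      show ?thesis
      proof (cases "t \<le> 3")
        case True
        then show ?thesis using f1 f2 zero_hi[of 0 t] zero_hi[of 1 t] zero_lo[of t 3]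
          by (simp add: TT_def GG_def inner_vec_def sum_4 power2_eq_square[symmetric])
      next
        case False
        then show ?thesis using f1 f2 zero_hi[of 0 t] zero_hi[of 1 t] zero_hi[of 2 t]
          by (simp add: TT_def GG_def inner_vec_def sum_4 power2_eq_square[symmetric])
      qed
    qed
  qed
  then show ?thesis by (simp add: norm_eq_1)
qed

definition gam :: "real \<Rightarrow> real^4" where "gam t = integral {0..t} TT"

lemma gam_deriv: assumes "0 < t" shows "(gam has_vector_derivative TT t) (at t)"
proof -
  have "((\<lambda>u. integral {0..u} TT) has_vector_derivative TT t) (at t within {0..t+1})"
    by (rule integral_has_vector_derivative) (use assms TT_cont in auto)
  then have "((\<lambda>u. integral {0..u} TT) has_vector_derivative TT t) (at t within {0<..<t+1})"
    by (rule has_vector_derivative_within_subset) auto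
  then show ?thesis unfolding gam_def[abs_def]
    using has_vector_derivative_within_open[of t "{0<..<t+1}"] assms by auto
qed

lemma gam_vd: "0 < t \<Longrightarrow> vector_derivative gam (at t) = TT t"
  using gam_deriv vector_derivative_at by blast

lemma gam_curve: assumes "0 < b" shows "unit_speed_curve {0<..<b} gam"
proof -
  obtain DT where DT: "DT 0 = TT" "\<And>n t. (DT n has_vector_derivative DT (Suc n) t) (at t)"
    using TT_smooth[of UNIV] unfolding smooth_on_def by blast
  have "smooth_on {0<..<b} gam" unfolding smooth_on_def
  proof (intro exI[of _ "\<lambda>n. case n of 0 \<Rightarrow> gam | Suc m \<Rightarrow> DT m"] conjI allI ballI)
    fix n t assume t: "t \<in> {0<..<b}"
    show "((case n of 0 \<Rightarrow> gam | Suc m \<Rightarrow> DT m) has_vector_derivative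
       (case Suc n of 0 \<Rightarrow> gam | Suc m \<Rightarrow> DT m) t) (at t)"
      using gam_deriv[of t] t DT by (cases n) auto
  qed simp
  then show ?thesis unfolding unit_speed_curve_def using assms gam_vd TT_norm
    by (auto simp: is_interval_def)
qed




lemma SM_uminus: "f \<in> SM \<Longrightarrow> (\<lambda>t. - f t) \<in> SM"
  using SM_mult[OF SM_const[of "-1"], of f] by simp

definition AA :: "real \<Rightarrow> real^4" where "AA t = vector [- sin (gg 0 t), cos (gg 0 t), 0, 0]"
definition BB :: "real \<Rightarrow> real^4" where "BB t = vector [- sin (gg 1 t), 0, cos (gg 1 t), 0]"
definition EE :: "real^4" where "EE = vector [0, 0, 0, 1]"
definition ZZ :: "real \<Rightarrow> real^4^4" where "ZZ t = vector [TT t, AA t, BB t, EE]"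

definition dAA :: "real \<Rightarrow> real^4" where "dAA t = vector [- dg 0 t * cos (gg 0 t), - dg 0 t * sin (gg 0 t), 0, 0]"
definition dBB :: "real \<Rightarrow> real^4" where "dBB t = vector [- dg 1 t * cos (gg 1 t), 0, - dg 1 t * sin (gg 1 t), 0]"

lemma ZZ_deriv: "(ZZ has_vector_derivative vector [dTT t, dAA t, dBB t, 0]) (at t)"
proof -
  have a: "(AA has_vector_derivative dAA t) (at t)"
    unfolding AA_def[abs_def] dAA_def
    by (intro vector4_vd) (auto simp: has_real_derivative_iff_has_vector_derivative[symmetric] algebra_simps
       intro!: derivative_eq_intros gg_deriv)
  have b: "(BB has_vector_derivative dBB t) (at t)"
    unfolding BB_def[abs_def] dBB_def
    by (intro vector4_vd) (auto simp: has_real_derivative_iff_has_vector_derivative[symmetric] algebra_simps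
       intro!: derivative_eq_intros gg_deriv)
  show ?thesis unfolding ZZ_def[abs_def]
    by (intro vector4_vd TT_deriv a b) simp
qed

lemma ZZ_smooth: "smooth_on S ZZ"
proof -
  have "smooth_on S AA" unfolding AA_def[abs_def]
    by (intro vector4_smooth SM_smooth SM.intros SM_uminus gg_SM)
  moreover have "smooth_on S BB" unfolding BB_def[abs_def]
    by (intro vector4_smooth SM_smooth SM.intros SM_uminus gg_SM)
  moreover have "smooth_on S (\<lambda>t. EE)" unfolding EE_def
    by (intro vector4_smooth SM_smooth SM.intros)
  ultimately show ?thesis unfolding ZZ_def[abs_def]
    by (intro vector4_smooth TT_smooth)
qed

lemma ZZ_orth: assumes "0 < t" "t < 2" shows "orthogonal_matrix (ZZ t)"
  unfolding orthogonal_matrix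
proof (cases "t \<le> 1")
  case True
  then show "transpose (ZZ t) ** ZZ t = mat 1" using zero_lo[of t 1] zero_lo[of t 2] zero_lo[of t 3]
    by (simp add: vec_eq_iff forall_4 matrix_matrix_mult_def transpose_def mat_def sum_4
        ZZ_def TT_def AA_def BB_def EE_def GG_def algebra_simps power2_eq_square[symmetric])
next
  case False
  then show "transpose (ZZ t) ** ZZ t = mat 1" using assms zero_hi[of 0 t] zero_lo[of t 2] zero_lo[of t 3]
    by (simp add: vec_eq_iff forall_4 matrix_matrix_mult_def transpose_def mat_def sum_4
        ZZ_def TT_def AA_def BB_def EE_def GG_def algebra_simps power2_eq_square[symmetric])
qed

lemma ZZ_eq: assumes "0 < t" "t < 2"
  shows "vector [dTT t, dAA t, dBB t, 0] = shape_C (dg 0 t) (dg 1 t) 0 ** ZZ t"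
proof (cases "t \<le> 1")
  case True
  then show ?thesis using zero_lo[of t 1] zero_lo[of t 2] zero_lo[of t 3]
    by (simp add: vec_eq_iff forall_4 matrix_matrix_mult_def sum_4 shape_C_def
        ZZ_def TT_def AA_def BB_def EE_def GG_def dTT_def dAA_def dBB_def algebra_simps)
next
  case False
  then show ?thesis using assms zero_hi[of 0 t] zero_lo[of t 2] zero_lo[of t 3]
    by (simp add: vec_eq_iff forall_4 matrix_matrix_mult_def sum_4 shape_C_def
        ZZ_def TT_def AA_def BB_def EE_def GG_def dTT_def dAA_def dBB_def algebra_simps)
qed

lemma part1_C: "admits_frame_type {0<..<2} gam shape_C"
proof -
  have f: "frame_on {0<..<2} gam ZZ" unfolding frame_on_def
    using ZZ_smooth ZZ_orth gam_vd by (auto simp: ZZ_def)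
  have e: "(\<lambda>s. \<chi> i. ZZ s $ id i) = ZZ" by (simp add: vec_lambda_eta)
  have d: "\<forall>t\<in>{0<..<2}. ((\<lambda>s. \<chi> i. ZZ s $ id i) has_vector_derivative shape_C (dg 0 t) (dg 1 t) 0 ** (\<chi> i. ZZ t $ id i)) (at t)"
    unfolding e
  proof
    fix t :: real assume "t \<in> {0<..<2}"
    then have "vector [dTT t, dAA t, dBB t, 0] = shape_C (dg 0 t) (dg 1 t) 0 ** ZZ t" using ZZ_eq by auto
    then show "(ZZ has_vector_derivative shape_C (dg 0 t) (dg 1 t) 0 ** (\<chi> i. ZZ t $ id i)) (at t)"
      using ZZ_deriv[of t] by (simp add: vec_lambda_eta)
  qed
  show ?thesis unfolding admits_frame_type_def
    apply (rule exI[of _ ZZ], rule exI[of _ id], rule exI[of _ "dg 0"], rule exI[of _ "dg 1"], rule exI[of _ "\<lambda>_. 0"])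
    using f d permutes_id SM_smooth[OF dg_SM] SM_smooth[OF SM_const] by auto
qed




lemma endpt:
  fixes f :: "real \<Rightarrow> real"
  assumes "a < b" "continuous_on {a..b} f" "\<And>s. a < s \<Longrightarrow> s < b \<Longrightarrow> f s = 0"
  shows "f a = 0 \<and> f b = 0"
proof -
  have c: "continuous_on (closure {a<..<b}) f" using assms by simp
  have "f a = 0" by (rule continuous_constant_on_closure[OF c]) (use assms in auto)
  moreover have "f b = 0" by (rule continuous_constant_on_closure[OF c]) (use assms in auto)
  ultimately show ?thesis by simp
qed

lemma frame_facts:
  fixes Z :: "real \<Rightarrow> real^4^4" and Mt :: "real \<Rightarrow> real^4^4"
  assumes fr: "frame_on I gam Z" and perm: "\<sigma> permutes (UNIV :: 4 set)" and s1: "\<sigma> 1 = 1"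
    and der: "\<forall>t\<in>I. ((\<lambda>s. \<chi> i. Z s $ \<sigma> i) has_vector_derivative (Mt t ** (\<chi> i. Z t $ \<sigma> i))) (at t)"
    and IP: "I \<subseteq> {0<..}" and oI: "open I"
    and P: "P = (\<lambda>s. \<chi> i. Z s $ \<sigma> i)"
  shows "\<forall>t\<in>I. P t $ 1 = TT t"
    and "\<forall>t\<in>I. \<forall>i j. P t $ i \<bullet> P t $ j = (if i = j then 1 else 0)"
    and "\<forall>t\<in>I. \<forall>i k. ((\<lambda>s. P s $ i $ k) has_real_derivative (Mt t ** P t) $ i $ k) (at t)"
    and "\<forall>t\<in>I. \<forall>k. (Mt t ** P t) $ 1 $ k = dTT t $ k"
    and "\<forall>i k. continuous_on I (\<lambda>s. P s $ i $ k)"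
proof -
  show P1: "\<forall>t\<in>I. P t $ 1 = TT t"
    using fr IP gam_vd s1 unfolding frame_on_def P by auto
  show "\<forall>t\<in>I. \<forall>i j. P t $ i \<bullet> P t $ j = (if i = j then 1 else 0)"
  proof (intro ballI allI)
    fix t i j assume t: "t \<in> I"
    then have o: "orthogonal_matrix (Z t)" using fr unfolding frame_on_def by auto
    have r: "row i (Z t) = Z t $ i" for i by (simp add: row_def vec_lambda_eta)
    have inj: "\<sigma> i = \<sigma> j \<longleftrightarrow> i = j" using permutes_inj[OF perm] by (auto dest: injD)
    show "P t $ i \<bullet> P t $ j = (if i = j then 1 else 0)"
    proof -
      have "\<forall>i. norm (Z t $ i) = 1" "\<forall>i j. i \<noteq> j \<longrightarrow> orthogonal (Z t $ i) (Z t $ j)"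
        using o unfolding orthogonal_matrix_orthonormal_rows r by auto
      then show ?thesis using inj unfolding P by (auto simp: norm_eq_1 orthogonal_def)
    qed
  qed
  show D: "\<forall>t\<in>I. \<forall>i k. ((\<lambda>s. P s $ i $ k) has_real_derivative (Mt t ** P t) $ i $ k) (at t)"
  proof (intro ballI allI)
    fix t i k assume t: "t \<in> I"
    have "(P has_vector_derivative Mt t ** P t) (at t)" using der t unfolding P by auto
    from vd_nth[OF vd_nth[OF this, of i], of k]
    show "((\<lambda>s. P s $ i $ k) has_real_derivative (Mt t ** P t) $ i $ k) (at t)"
      by (simp add: has_real_derivative_iff_has_vector_derivative)
  qed
  show "\<forall>t\<in>I. \<forall>k. (Mt t ** P t) $ 1 $ k = dTT t $ k"
  proof (intro ballI allI)
    fix t k assume t: "t \<in> I"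
    have a: "((\<lambda>s. P s $ 1 $ k) has_real_derivative (Mt t ** P t) $ 1 $ k) (at t)" using D t by auto
    have "((\<lambda>s. TT s $ k) has_real_derivative (Mt t ** P t) $ 1 $ k) (at t)"
      by (rule has_field_derivative_transform_within_open[OF a oI t]) (use P1 in auto)
    moreover have "((\<lambda>s. TT s $ k) has_real_derivative dTT t $ k) (at t)"
      using vd_nth[OF TT_deriv[of t], of k] by (simp add: has_real_derivative_iff_has_vector_derivative)
    ultimately show "(Mt t ** P t) $ 1 $ k = dTT t $ k" by (rule DERIV_unique)
  qed
  show "\<forall>i k. continuous_on I (\<lambda>s. P s $ i $ k)"
  proof (intro allI)
    fix i k
    show "continuous_on I (\<lambda>s. P s $ i $ k)"
      by (rule continuous_at_imp_continuous_on) (use D DERIV_isCont in blast)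
  qed
qed

lemma cos_gg_pos: "cos (gg j t) > 0"
proof -
  have "gg j t \<le> 1" "0 \<le> gg j t" using gg_bounds by auto
  moreover have "1 < pi / 2" using pi_gt3 by simp
  ultimately show ?thesis by (intro cos_gt_zero_pi) auto
qed

lemma TT_int: "TT (real j) = vector [1, 0, 0, 0]"
proof -
  have "gg i (real j) = 0" for i
  proof (cases "j \<le> i")
    case True then show ?thesis using zero_lo[of "real j" i] by simp
  next
    case False then show ?thesis using zero_hi[of i "real j"] by simp
  qed
  then show ?thesis by (simp add: TT_def GG_def)
qed




lemma gg_int: "gg i (real j) = 0"
proof (cases "j \<le> i")
  case True then show ?thesis using zero_lo[of "real j" i] by simp
next
  case False then show ?thesis using zero_hi[of i "real j"] by simp
qed

lemma gg_1: "gg i 1 = 0" using gg_int[of i 1] by simp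
lemma gg_2: "gg i 2 = 0" using gg_int[of i 2] by simp
lemma gg_3: "gg i 3 = 0" using gg_int[of i 3] by simp
lemma TT_1: "TT 1 = vector [1,0,0,0]" using TT_int[of 1] by simp
lemma TT_2: "TT 2 = vector [1,0,0,0]" using TT_int[of 2] by simp
lemma TT_3: "TT 3 = vector [1,0,0,0]" using TT_int[of 3] by simp

lemma inner4: "(x::real^4) \<bullet> y = x$1 * y$1 + x$2 * y$2 + x$3 * y$3 + x$4 * y$4"
  by (simp add: inner_vec_def sum_4)

lemma shapeC_row1: "(shape_C a b c ** Q) $ 1 $ k = a * Q$2$k + b * Q$3$k"
  unfolding matrix_matrix_mult_def vec_lambda_beta sum_4 shape_C_def vector4_nth by simp
lemma shapeC_row3: "(shape_C a b c ** Q) $ 3 $ k = - b * Q$1$k"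
  unfolding matrix_matrix_mult_def vec_lambda_beta sum_4 shape_C_def vector4_nth by simp

lemma part2: "\<not> admits_frame_type {0<..<4} gam shape_C"
proof
  assume "admits_frame_type {0<..<4} gam shape_C"
  then obtain Z \<sigma> x1 x2 x3 where fr: "frame_on {0<..<4} gam Z" and perm: "\<sigma> permutes (UNIV :: 4 set)"
    and s1: "\<sigma> 1 = 1"
    and der: "\<forall>t\<in>{0<..<4}. ((\<lambda>s. \<chi> i. Z s $ \<sigma> i) has_vector_derivative
                   (shape_C (x1 t) (x2 t) (x3 t) ** (\<chi> i. Z t $ \<sigma> i))) (at t)"
    unfolding admits_frame_type_def by blast
  define P where "P = (\<lambda>s. \<chi> i. Z s $ \<sigma> i)"
  define I :: "real set" where "I = {0<..<4}"
  have sub: "{0<..<4::real} \<subseteq> {0<..}" by auto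
  note ff = frame_facts[where Mt = "\<lambda>t. shape_C (x1 t) (x2 t) (x3 t)", OF fr perm s1 der sub open_greaterThanLessThan P_def]
  have P1: "\<And>t. t \<in> I \<Longrightarrow> P t $ 1 = TT t" using ff(1) unfolding I_def by auto
  have ON: "\<And>t i j. t \<in> I \<Longrightarrow> P t $ i \<bullet> P t $ j = (if i = j then 1 else 0)" using ff(2) unfolding I_def by auto
  have DV: "\<And>t i k. t \<in> I \<Longrightarrow> ((\<lambda>s. P s $ i $ k) has_real_derivative (shape_C (x1 t) (x2 t) (x3 t) ** P t) $ i $ k) (at t)"
    using ff(3) unfolding I_def by auto
  have R1: "\<And>t k. t \<in> I \<Longrightarrow> dTT t $ k = x1 t * P t $ 2 $ k + x2 t * P t $ 3 $ k"
    using ff(4) unfolding I_def by (auto simp: shapeC_row1)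
  have CT: "\<And>i k S. S \<subseteq> I \<Longrightarrow> continuous_on S (\<lambda>s. P s $ i $ k)"
    using ff(5) unfolding I_def by (meson continuous_on_subset)
  have CdT: "P t $ 4 $ 1 * dTT t $ 1 + P t $ 4 $ 2 * dTT t $ 2 + P t $ 4 $ 3 * dTT t $ 3 + P t $ 4 $ 4 * dTT t $ 4 = 0"
    if t: "t \<in> I" for t
  proof -
    have "P t $ 4 \<bullet> P t $ 2 = 0" "P t $ 4 \<bullet> P t $ 3 = 0" using ON[OF t] by auto
    then show ?thesis unfolding R1[OF t] inner4 by algebra
  qed
  have h0: "- P s $ 4 $ 1 * sin (gg 0 s) + P s $ 4 $ 2 * cos (gg 0 s) = 0" if "0 < s" "s < 1" "s \<noteq> 1/2" for s
  proof -
    have "s \<in> I" using that unfolding I_def by auto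
    from CdT[OF this] have "dg 0 s * (- P s $ 4 $ 1 * sin (gg 0 s) + P s $ 4 $ 2 * cos (gg 0 s)) = 0"
      using that zero_lo[of s 1] zero_lo[of s 2] zero_lo[of s 3]
      by (simp add: dTT_def GG_def algebra_simps)
    moreover have "dg 0 s \<noteq> 0" using dg_nz[of 0 s] that by simp
    ultimately show ?thesis by simp
  qed
  have h1: "- P s $ 4 $ 1 * sin (gg 1 s) + P s $ 4 $ 3 * cos (gg 1 s) = 0" if "1 < s" "s < 2" "s \<noteq> 3/2" for s
  proof -
    have "s \<in> I" using that unfolding I_def by auto
    from CdT[OF this] have "dg 1 s * (- P s $ 4 $ 1 * sin (gg 1 s) + P s $ 4 $ 3 * cos (gg 1 s)) = 0"
      using that zero_hi[of 0 s] zero_lo[of s 2] zero_lo[of s 3]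
      by (simp add: dTT_def GG_def algebra_simps)
    moreover have "dg 1 s \<noteq> 0" using dg_nz[of 1 s] that by simp
    ultimately show ?thesis by simp
  qed
  have h2: "- P s $ 4 $ 1 * sin (gg 2 s) + P s $ 4 $ 4 * cos (gg 2 s) = 0" if "2 < s" "s < 3" "s \<noteq> 5/2" for s
  proof -
    have "s \<in> I" using that unfolding I_def by auto
    from CdT[OF this] have "dg 2 s * (- P s $ 4 $ 1 * sin (gg 2 s) + P s $ 4 $ 4 * cos (gg 2 s)) = 0"
      using that zero_hi[of 0 s] zero_hi[of 1 s] zero_lo[of s 3]
      by (simp add: dTT_def GG_def algebra_simps)
    moreover have "dg 2 s \<noteq> 0" using dg_nz[of 2 s] that by simp
    ultimately show ?thesis by simp
  qed
  have h3: "- P s $ 4 $ 1 * sin (gg 3 s) + P s $ 4 $ 2 * cos (gg 3 s) = 0" if "3 < s" "s < 4" "s \<noteq> 7/2" for s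
  proof -
    have "s \<in> I" using that unfolding I_def by auto
    from CdT[OF this] have "dg 3 s * (- P s $ 4 $ 1 * sin (gg 3 s) + P s $ 4 $ 2 * cos (gg 3 s)) = 0"
      using that zero_hi[of 0 s] zero_hi[of 1 s] zero_hi[of 2 s]
      by (simp add: dTT_def GG_def algebra_simps)
    moreover have "dg 3 s \<noteq> 0" using dg_nz[of 3 s] that by simp
    ultimately show ?thesis by simp
  qed
  have cts: "continuous_on {a..b} (\<lambda>s. - P s $ 4 $ 1 * sin (gg j s) + P s $ 4 $ m * cos (gg j s))"
    if "0 < a" "b < 4" for a b j m
  proof -
    have "{a..b} \<subseteq> I" using that unfolding I_def by auto
    then show ?thesis by (intro continuous_intros CT)
  qed
  have c12: "P 1 $ 4 $ 2 = 0"
  proof -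
    have "(\<lambda>s. - P s $ 4 $ 1 * sin (gg 0 s) + P s $ 4 $ 2 * cos (gg 0 s)) 1 = 0"
      by (rule conjunct2[OF endpt[of "1/2" "1" "\<lambda>s. - P s $ 4 $ 1 * sin (gg 0 s) + P s $ 4 $ 2 * cos (gg 0 s)"]]) (simp, rule cts, simp, simp, rule h0, auto)
    then show ?thesis using gg_1 by simp
  qed
  have c13: "P 1 $ 4 $ 3 = 0"
  proof -
    have "(\<lambda>s. - P s $ 4 $ 1 * sin (gg 1 s) + P s $ 4 $ 3 * cos (gg 1 s)) 1 = 0"
      by (rule conjunct1[OF endpt[of "1" "3/2" "\<lambda>s. - P s $ 4 $ 1 * sin (gg 1 s) + P s $ 4 $ 3 * cos (gg 1 s)"]]) (simp, rule cts, simp, simp, rule h1, auto)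
    then show ?thesis using gg_1 by simp
  qed
  have c23: "P 2 $ 4 $ 3 = 0"
  proof -
    have "(\<lambda>s. - P s $ 4 $ 1 * sin (gg 1 s) + P s $ 4 $ 3 * cos (gg 1 s)) 2 = 0"
      by (rule conjunct2[OF endpt[of "3/2" "2" "\<lambda>s. - P s $ 4 $ 1 * sin (gg 1 s) + P s $ 4 $ 3 * cos (gg 1 s)"]]) (simp, rule cts, simp, simp, rule h1, auto)
    then show ?thesis using gg_2 by simp
  qed
  have c24: "P 2 $ 4 $ 4 = 0"
  proof -
    have "(\<lambda>s. - P s $ 4 $ 1 * sin (gg 2 s) + P s $ 4 $ 4 * cos (gg 2 s)) 2 = 0"
      by (rule conjunct1[OF endpt[of "2" "5/2" "\<lambda>s. - P s $ 4 $ 1 * sin (gg 2 s) + P s $ 4 $ 4 * cos (gg 2 s)"]]) (simp, rule cts, simp, simp, rule h2, auto)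
    then show ?thesis using gg_2 by simp
  qed
  have c34: "P 3 $ 4 $ 4 = 0"
  proof -
    have "(\<lambda>s. - P s $ 4 $ 1 * sin (gg 2 s) + P s $ 4 $ 4 * cos (gg 2 s)) 3 = 0"
      by (rule conjunct2[OF endpt[of "5/2" "3" "\<lambda>s. - P s $ 4 $ 1 * sin (gg 2 s) + P s $ 4 $ 4 * cos (gg 2 s)"]]) (simp, rule cts, simp, simp, rule h2, auto)
    then show ?thesis using gg_3 by simp
  qed
  have c32: "P 3 $ 4 $ 2 = 0"
  proof -
    have "(\<lambda>s. - P s $ 4 $ 1 * sin (gg 3 s) + P s $ 4 $ 2 * cos (gg 3 s)) 3 = 0"
      by (rule conjunct1[OF endpt[of "3" "7/2" "\<lambda>s. - P s $ 4 $ 1 * sin (gg 3 s) + P s $ 4 $ 2 * cos (gg 3 s)"]]) (simp, rule cts, simp, simp, rule h3, auto)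
    then show ?thesis using gg_3 by simp
  qed
  have I1: "1 \<in> I" and I2: "2 \<in> I" and I3: "3 \<in> I" unfolding I_def by auto
  have c11: "P 1 $ 4 $ 1 = 0" using ON[OF I1, of 4 1] P1[OF I1] TT_1 by (simp add: inner4)
  have c21: "P 2 $ 4 $ 1 = 0" using ON[OF I2, of 4 1] P1[OF I2] TT_2 by (simp add: inner4)
  have c31: "P 3 $ 4 $ 1 = 0" using ON[OF I3, of 4 1] P1[OF I3] TT_3 by (simp add: inner4)
  have b14: "P 1 $ 3 $ 4 = 0"
  proof -
    have "P 1 $ 4 $ 4 * P 1 $ 4 $ 4 = 1" using ON[OF I1, of 4 4] c11 c12 c13 by (simp add: inner4)
    moreover have "P 1 $ 3 $ 4 * P 1 $ 4 $ 4 = 0" using ON[OF I1, of 3 4] c11 c12 c13 by (simp add: inner4)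
    ultimately show ?thesis by (metis mult_zero_left zero_neq_one mult_eq_0_iff)
  qed
  have b22: "P 2 $ 3 $ 2 = 0"
  proof -
    have "P 2 $ 4 $ 2 * P 2 $ 4 $ 2 = 1" using ON[OF I2, of 4 4] c21 c23 c24 by (simp add: inner4)
    moreover have "P 2 $ 3 $ 2 * P 2 $ 4 $ 2 = 0" using ON[OF I2, of 3 4] c21 c23 c24 by (simp add: inner4)
    ultimately show ?thesis by (metis mult_zero_left zero_neq_one mult_eq_0_iff)
  qed
  have b33: "P 3 $ 3 $ 3 = 0"
  proof -
    have "P 3 $ 4 $ 3 * P 3 $ 4 $ 3 = 1" using ON[OF I3, of 4 4] c31 c32 c34 by (simp add: inner4)
    moreover have "P 3 $ 3 $ 3 * P 3 $ 4 $ 3 = 0" using ON[OF I3, of 3 4] c31 c32 c34 by (simp add: inner4)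
    ultimately show ?thesis by (metis mult_zero_left zero_neq_one mult_eq_0_iff)
  qed
  have b21: "P 2 $ 3 $ 1 = 0" using ON[OF I2, of 3 1] P1[OF I2] TT_2 by (simp add: inner4)
  have b24: "P 2 $ 3 $ 4 = P 1 $ 3 $ 4"
  proof (rule DERIV_isconst_end[of 1 2 "\<lambda>s. P s $ 3 $ 4", simplified])
    show "continuous_on {1..2} (\<lambda>s. P s $ 3 $ 4)" by (rule CT) (auto simp: I_def)
    fix x :: real assume x: "1 < x" "x < 2"
    then have xI: "x \<in> I" unfolding I_def by auto
    have "TT x $ 4 = 0" using zero_lo[of x 2] x by (simp add: TT_def)
    then show "((\<lambda>s. P s $ 3 $ 4) has_real_derivative 0) (at x)"
      using DV[OF xI, of 3 4] P1[OF xI] by (simp add: shapeC_row3)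
  qed
  have b23: "P 2 $ 3 $ 3 = P 3 $ 3 $ 3"
  proof -
    have "P 3 $ 3 $ 3 = P 2 $ 3 $ 3"
    proof (rule DERIV_isconst_end[of 2 3 "\<lambda>s. P s $ 3 $ 3", simplified])
      show "continuous_on {2..3} (\<lambda>s. P s $ 3 $ 3)" by (rule CT) (auto simp: I_def)
      fix x :: real assume x: "2 < x" "x < 3"
      then have xI: "x \<in> I" unfolding I_def by auto
      have "TT x $ 3 = 0" using zero_hi[of 1 x] x by (simp add: TT_def)
      then show "((\<lambda>s. P s $ 3 $ 3) has_real_derivative 0) (at x)"
        using DV[OF xI, of 3 3] P1[OF xI] by (simp add: shapeC_row3)
    qed
    then show ?thesis by simp
  qed
  have "P 2 $ 3 \<bullet> P 2 $ 3 = 1" using ON[OF I2, of 3 3] by simp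
  then show False using b21 b22 b23 b33 b24 b14 by (simp add: inner4)
qed




lemma shapeD_row1: "(shape_D a b c ** Q) $ 1 $ k = a * Q$2$k"
  unfolding matrix_matrix_mult_def vec_lambda_beta sum_4 shape_D_def vector4_nth by simp

lemma part1_notD: "\<not> admits_frame_type {0<..<2} gam shape_D"
proof
  assume "admits_frame_type {0<..<2} gam shape_D"
  then obtain Z \<sigma> x1 x2 x3 where fr: "frame_on {0<..<2} gam Z" and perm: "\<sigma> permutes (UNIV :: 4 set)"
    and s1: "\<sigma> 1 = 1"
    and der: "\<forall>t\<in>{0<..<2}. ((\<lambda>s. \<chi> i. Z s $ \<sigma> i) has_vector_derivative
                   (shape_D (x1 t) (x2 t) (x3 t) ** (\<chi> i. Z t $ \<sigma> i))) (at t)"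
    unfolding admits_frame_type_def by blast
  define P where "P = (\<lambda>s. \<chi> i. Z s $ \<sigma> i)"
  define I :: "real set" where "I = {0<..<2}"
  have sub: "{0<..<2::real} \<subseteq> {0<..}" by auto
  note ff = frame_facts[where Mt = "\<lambda>t. shape_D (x1 t) (x2 t) (x3 t)", OF fr perm s1 der sub open_greaterThanLessThan P_def]
  have P1: "\<And>t. t \<in> I \<Longrightarrow> P t $ 1 = TT t" using ff(1) unfolding I_def by auto
  have ON: "\<And>t i j. t \<in> I \<Longrightarrow> P t $ i \<bullet> P t $ j = (if i = j then 1 else 0)" using ff(2) unfolding I_def by auto
  have R1: "\<And>t k. t \<in> I \<Longrightarrow> dTT t $ k = x1 t * P t $ 2 $ k"
    using ff(4) unfolding I_def by (auto simp: shapeD_row1)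
  have CT: "\<And>i k S. S \<subseteq> I \<Longrightarrow> continuous_on S (\<lambda>s. P s $ i $ k)"
    using ff(5) unfolding I_def by (meson continuous_on_subset)
  have L: "P s $ 2 $ 3 = 0 \<and> P s $ 2 $ 4 = 0" if "1/2 < s" "s < 1" for s
  proof -
    have sI: "s \<in> I" using that unfolding I_def by auto
    have "dg 0 s \<noteq> 0" using dg_nz[of 0 s] that by simp
    then have "dTT s $ 2 \<noteq> 0" using cos_gg_pos[of 0 s] zero_lo[of s 3] that
      by (simp add: dTT_def)
    then have "x1 s \<noteq> 0" using R1[OF sI, of 2] by auto
    moreover have "dTT s $ 3 = 0" "dTT s $ 4 = 0" using zero_lo[of s 1] zero_lo[of s 2] that
      by (simp_all add: dTT_def)
    ultimately show ?thesis using R1[OF sI, of 3] R1[OF sI, of 4] by simp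
  qed
  have R: "P s $ 2 $ 2 = 0" if "1 < s" "s < 3/2" for s
  proof -
    have sI: "s \<in> I" using that unfolding I_def by auto
    have "dg 1 s \<noteq> 0" using dg_nz[of 1 s] that by simp
    then have "dTT s $ 3 \<noteq> 0" using cos_gg_pos[of 1 s] that
      by (simp add: dTT_def)
    then have "x1 s \<noteq> 0" using R1[OF sI, of 3] by auto
    moreover have "dTT s $ 2 = 0" using zero_hi[of 0 s] zero_lo[of s 3] that
      by (simp add: dTT_def)
    ultimately show ?thesis using R1[OF sI, of 2] by simp
  qed
  have a3: "P 1 $ 2 $ 3 = 0"
    by (rule conjunct2[OF endpt[of "1/2" 1 "\<lambda>s. P s $ 2 $ 3"]]) (simp, rule CT, auto simp: I_def L)
  have a4: "P 1 $ 2 $ 4 = 0"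
    by (rule conjunct2[OF endpt[of "1/2" 1 "\<lambda>s. P s $ 2 $ 4"]]) (simp, rule CT, auto simp: I_def L)
  have a2: "P 1 $ 2 $ 2 = 0"
    by (rule conjunct1[OF endpt[of 1 "3/2" "\<lambda>s. P s $ 2 $ 2"]]) (simp, rule CT, auto simp: I_def R)
  have I1: "1 \<in> I" unfolding I_def by auto
  have a1: "P 1 $ 2 $ 1 = 0" using ON[OF I1, of 2 1] P1[OF I1] TT_1 by (simp add: inner4)
  have "P 1 $ 2 \<bullet> P 1 $ 2 = 1" using ON[OF I1, of 2 2] by simp
  then show False using a1 a2 a3 a4 by (simp add: inner4)
qed

theorem theorem1:
  shows "(\<exists>I \<gamma>. unit_speed_curve I \<gamma> \<and> admits_frame_type I \<gamma> shape_C \<and>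
                 \<not> admits_frame_type I \<gamma> shape_D) \<and>
         (\<exists>I \<gamma>. unit_speed_curve I \<gamma> \<and> \<not> admits_frame_type I \<gamma> shape_C)"
  using gam_curve[of 2] gam_curve[of 4] part1_C part1_notD part2 by auto


end
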